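(* Under the hypotheses of the context with $\nu_0=0$, $\nu_1=\nu$, $x_0(s)\neq0$ and $s^{-\nu}y_1(s)/x_0(s)\to1$ as $s\to0^+$, define functions $q,p,u,v$ of $t>0$ by $t=4s$ and $$x_0(s)=i s^{-\nu/2}q(t),\quad y_0(s)=i s^{\nu/2}\big(p(t)-\tfrac{\nu}{2}q(t)\big),\quad \eta_0(s)=-\tfrac14u(t),\quad \xi_0(s)=\tfrac14\big(-v(t)+\tfrac{\nu}{2}u(t)\big).$$ Then, with $\dot{}=d/dt$, $$tq^2=\tfrac14u^2+u+2v,\qquad u=4p^2-(\nu^2-t+2v)q^2+2qpu,\qquad \dot u=q^2,\qquad \dot v=qp,$$ $$t\dot q=p+\tfrac14qu,\qquad t\dot p=\big(\tfrac14\nu^2-\tfrac14t+\tfrac12v\big)q-\tfrac14pu .$$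
   Context: Fix complex parameters $\nu_0,\nu_1$ and put $e_1=\nu_0+\nu_1$, $e_2=\nu_0\nu_1$. Let $x_0,x_1,y_0,y_1,\xi_0,\xi_1,\eta_0,\eta_1$ be smooth complex-valued functions of $s\in(0,\infty)$ satisfying, with $'=d/ds$, the system $s x_0'=-\eta_0x_0-x_1$, $s x_1'=-\eta_1x_0+sx_0+\xi_0x_0+\xi_1x_1$, $s y_1'=-\xi_1y_1+y_0$, $s y_0'=-\xi_0y_1-sy_1+\eta_0y_0+\eta_1y_1$, $\xi_0'=x_0y_0$, $\xi_1'=x_0y_1$, $\eta_0'=x_0y_1$, $\eta_1'=x_1y_1$, together with the boundary behaviour as $s\to0^+$: $\xi_0\to e_2$, $\xi_1\to-e_1$, $\eta_0\to0$, $\eta_1\to0$, and $x_j(s)y_k(s)\to0$ for all $j,k\in\{0,1\}$. *)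

theory Defs
  imports "HOL-Analysis.Analysis"
begin

end

theory Submission imports Defs begin

lemma cpow_add: fixes s::real assumes "s>0" shows "(of_real s::complex) powr (a+b) = of_real s powr a * of_real s powr b"
  using assms by (simp add: powr_def exp_add distrib_right)

lemma cpow_nz: fixes s::real assumes "s>0" shows "(of_real s::complex) powr a \<noteq> 0"
  using assms by (simp add: powr_def)

lemma cpow_deriv: fixes s::real assumes "s>0"
  shows "((\<lambda>s. (of_real s::complex) powr w) has_vector_derivative (w * of_real s powr w / of_real s)) (at s)"
proof -
  have nr: "(of_real s::complex) \<notin> \<real>\<^sub>\<le>\<^sub>0" using assms by (auto simp: nonpos_Reals_def)
  have "((\<lambda>s. (of_real s::complex) powr w) has_vector_derivative (w * of_real s powr (w-1))) (at s)"
    by (rule has_vector_derivative_real_field[OF has_field_derivative_powr[OF nr]])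
  moreover have "(of_real s::complex) powr (w-1) = of_real s powr w / of_real s"
    using assms cpow_add[OF assms, of w "-1"] by (simp add: powr_def exp_minus field_simps)
  ultimately show ?thesis by simp
qed

lemma chain4: fixes f :: "real \<Rightarrow> complex"
  assumes "(f has_vector_derivative D) (at (t/4))"
  shows "((\<lambda>\<tau>. f (\<tau>/4)) has_vector_derivative D/4) (at t)"
proof -
  have "((\<lambda>\<tau>::real. \<tau>/4) has_vector_derivative (1/4)) (at t)"
    by (auto intro!: derivative_eq_intros simp: has_real_derivative_iff_has_vector_derivative[symmetric])
  from vector_diff_chain_at[OF this assms] show ?thesis by (simp add: o_def scaleR_conv_of_real)
qed

lemma const0: fixes f :: "real \<Rightarrow> complex"
  assumes d: "\<And>s. s>0 \<Longrightarrow> (f has_vector_derivative 0) (at s)" and l: "(f \<longlongrightarrow> L) (at_right 0)"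
  shows "\<And>s. s>0 \<Longrightarrow> f s = L"
proof -
  have c: "continuous_on {0<..} f"
    using d by (intro continuous_at_imp_continuous_on) (auto intro: has_vector_derivative_continuous)
  have "f constant_on {0<..}"
    apply (rule has_derivative_zero_connected_constant_on[where K="{}"])
    using c d by (auto simp: has_vector_derivative_def has_derivative_at_withinI)
  then obtain c where fc: "\<And>s. s>0 \<Longrightarrow> f s = c" by (auto simp: constant_on_def)
  have "(f \<longlongrightarrow> c) (at_right 0)"
    proof (rule tendsto_eventually)
    have "eventually (\<lambda>x::real. x > 0) (at_right 0)" by (simp add: eventually_at_right_less)
    then show "eventually (\<lambda>x. f x = c) (at_right 0)" by eventually_elim (simp add: fc)
  qed
  with l have "c = L" using tendsto_unique by (metis trivial_limit_at_right_real)
  with fc show "\<And>s. s>0 \<Longrightarrow> f s = L" by simp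
qed

lemma hvd_eq: "(f has_vector_derivative D) F \<Longrightarrow> D = E \<Longrightarrow> (f has_vector_derivative E) F" by simp

lemma hvd_inverse: fixes f :: "real \<Rightarrow> complex"
  assumes "(f has_vector_derivative f') (at x)" "f x \<noteq> 0"
  shows "((\<lambda>x. inverse (f x)) has_vector_derivative (- f' / (f x)^2)) (at x)"
  using field_vector_diff_chain_at[OF assms(1) DERIV_inverse[OF assms(2)]]
  by (simp add: o_def power2_eq_square divide_inverse)

lemma chain4_open: fixes f g :: "real \<Rightarrow> complex"
  assumes "(f has_vector_derivative D) (at (t/4))" "t > 0" "\<And>\<tau>. \<tau> > 0 \<Longrightarrow> g \<tau> = f (\<tau>/4)" "D/4 = E"
  shows "(g has_vector_derivative E) (at t)"
proof -
  have "((\<lambda>\<tau>. f (\<tau>/4)) has_vector_derivative D/4) (at t)" by (rule chain4[OF assms(1)])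
  then have "((\<lambda>\<tau>. f (\<tau>/4)) has_vector_derivative E) (at t)" using assms(4) by simp
  then show ?thesis
    by (rule has_vector_derivative_transform_within_open[where S="{0<..}"]) (use assms in auto)
qed

theorem mainTheorem5:
  fixes \<nu>0 \<nu>1 :: complex
    and x0 x1 y0 y1 \<xi>0 \<xi>1 \<eta>0 \<eta>1 :: "real \<Rightarrow> complex"
    and q p u v :: "real \<Rightarrow> complex"
  defines "e1 \<equiv> \<nu>0 + \<nu>1" and "e2 \<equiv> \<nu>0 * \<nu>1"
  assumes hx0: "\<And>s. s > 0 \<Longrightarrow> ((x0 has_vector_derivative
                  ((- \<eta>0 s * x0 s - x1 s) / of_real s)) (at s))"
    and hx1: "\<And>s. s > 0 \<Longrightarrow> ((x1 has_vector_derivative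
                  ((- \<eta>1 s * x0 s + of_real s * x0 s + \<xi>0 s * x0 s + \<xi>1 s * x1 s) / of_real s)) (at s))"
    and hy1: "\<And>s. s > 0 \<Longrightarrow> ((y1 has_vector_derivative
                  ((- \<xi>1 s * y1 s + y0 s) / of_real s)) (at s))"
    and hy0: "\<And>s. s > 0 \<Longrightarrow> ((y0 has_vector_derivative
                  ((- \<xi>0 s * y1 s - of_real s * y1 s + \<eta>0 s * y0 s + \<eta>1 s * y1 s) / of_real s)) (at s))"
    and h\<xi>0: "\<And>s. s > 0 \<Longrightarrow> ((\<xi>0 has_vector_derivative (x0 s * y0 s)) (at s))"
    and h\<xi>1: "\<And>s. s > 0 \<Longrightarrow> ((\<xi>1 has_vector_derivative (x0 s * y1 s)) (at s))"
    and h\<eta>0: "\<And>s. s > 0 \<Longrightarrow> ((\<eta>0 has_vector_derivative (x0 s * y1 s)) (at s))"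
    and h\<eta>1: "\<And>s. s > 0 \<Longrightarrow> ((\<eta>1 has_vector_derivative (x1 s * y1 s)) (at s))"
    and b\<xi>0: "(\<xi>0 \<longlongrightarrow> e2) (at_right 0)"
    and b\<xi>1: "(\<xi>1 \<longlongrightarrow> - e1) (at_right 0)"
    and b\<eta>0: "(\<eta>0 \<longlongrightarrow> 0) (at_right 0)"
    and b\<eta>1: "(\<eta>1 \<longlongrightarrow> 0) (at_right 0)"
    and b00: "((\<lambda>s. x0 s * y0 s) \<longlongrightarrow> 0) (at_right 0)"
    and b01: "((\<lambda>s. x0 s * y1 s) \<longlongrightarrow> 0) (at_right 0)"
    and b10: "((\<lambda>s. x1 s * y0 s) \<longlongrightarrow> 0) (at_right 0)"
    and b11: "((\<lambda>s. x1 s * y1 s) \<longlongrightarrow> 0) (at_right 0)"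
    and n0: "\<nu>0 = 0"
    and x0_nz: "\<And>s. s > 0 \<Longrightarrow> x0 s \<noteq> 0"
    and lim1: "((\<lambda>s. (of_real s) powr (- \<nu>1) * y1 s / x0 s) \<longlongrightarrow> 1) (at_right 0)"
    and dq: "\<And>t. t > 0 \<Longrightarrow> x0 (t / 4) = \<i> * (of_real (t / 4)) powr (- \<nu>1 / 2) * q t"
    and dp: "\<And>t. t > 0 \<Longrightarrow> y0 (t / 4) = \<i> * (of_real (t / 4)) powr (\<nu>1 / 2) * (p t - \<nu>1 / 2 * q t)"
    and du: "\<And>t. t > 0 \<Longrightarrow> \<eta>0 (t / 4) = - (1 / 4) * u t"
    and dv: "\<And>t. t > 0 \<Longrightarrow> \<xi>0 (t / 4) = (1 / 4) * (- v t + \<nu>1 / 2 * u t)"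
  shows "\<forall>t > 0.
           of_real t * (q t)\<^sup>2 = (1 / 4) * (u t)\<^sup>2 + u t + 2 * v t
         \<and> u t = 4 * (p t)\<^sup>2 - (\<nu>1\<^sup>2 - of_real t + 2 * v t) * (q t)\<^sup>2 + 2 * q t * p t * u t
         \<and> (u has_vector_derivative (q t)\<^sup>2) (at t)
         \<and> (v has_vector_derivative (q t * p t)) (at t)
         \<and> (q has_vector_derivative ((p t + (1 / 4) * q t * u t) / of_real t)) (at t)
         \<and> (p has_vector_derivative
              (((1 / 4) * \<nu>1\<^sup>2 - (1 / 4) * of_real t + (1 / 2) * v t) * q t - (1 / 4) * p t * u t) / of_real t) (at t)"
proof -
  have e1: "e1 = \<nu>1" and e2: "e2 = 0" using n0 by (simp_all add: e1_def e2_def)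
  have F1: "x0 s * y0 s + x1 s * y1 s = 0" if "s > 0" for s
  proof (rule const0[OF _ _ that])
    show "((\<lambda>s. x0 s * y0 s + x1 s * y1 s) \<longlongrightarrow> 0) (at_right 0)"
      using tendsto_add[OF b00 b11] by simp
    fix s :: real assume s: "s > 0"
    show "((\<lambda>s. x0 s * y0 s + x1 s * y1 s) has_vector_derivative 0) (at s)"
      apply (rule hvd_eq)
       apply (rule has_vector_derivative_add has_vector_derivative_mult hx0[OF s] hx1[OF s] hy0[OF s] hy1[OF s])+
      using s by (simp add: field_simps)
  qed
  have F2: "\<xi>1 s - \<eta>0 s = - \<nu>1" if "s > 0" for s
  proof (rule const0[OF _ _ that])
    show "((\<lambda>s. \<xi>1 s - \<eta>0 s) \<longlongrightarrow> - \<nu>1) (at_right 0)"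
      using tendsto_diff[OF b\<xi>1 b\<eta>0] e1 by simp
    fix s :: real assume s: "s > 0"
    show "((\<lambda>s. \<xi>1 s - \<eta>0 s) has_vector_derivative 0) (at s)"
      using has_vector_derivative_diff[OF h\<xi>1[OF s] h\<eta>0[OF s]] by simp
  qed
  have F3: "\<xi>0 s + \<eta>1 s = 0" if "s > 0" for s
  proof (rule const0[OF _ _ that])
    show "((\<lambda>s. \<xi>0 s + \<eta>1 s) \<longlongrightarrow> 0) (at_right 0)"
      using tendsto_add[OF b\<xi>0 b\<eta>1] e2 by simp
    fix s :: real assume s: "s > 0"
    show "((\<lambda>s. \<xi>0 s + \<eta>1 s) has_vector_derivative 0) (at s)"
      using has_vector_derivative_add[OF h\<xi>0[OF s] h\<eta>1[OF s]] F1[OF s] by simp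
  qed
  define P where "P s = (of_real s :: complex) powr (- \<nu>1)" for s
  have F4a: "P s * y1 s * inverse (x0 s) = 1" if "s > 0" for s
  proof (rule const0[OF _ _ that])
    show "((\<lambda>s. P s * y1 s * inverse (x0 s)) \<longlongrightarrow> 1) (at_right 0)"
      using lim1 by (simp add: P_def divide_inverse)
    fix s :: real assume s: "s > 0"
    have x1: "\<xi>1 s = \<eta>0 s - \<nu>1" using F2[OF s] by (simp add: algebra_simps)
    show "((\<lambda>s. P s * y1 s * inverse (x0 s)) has_vector_derivative 0) (at s)"
      apply (rule hvd_eq)
       apply (rule has_vector_derivative_mult[OF has_vector_derivative_mult[OF _ hy1[OF s]] hvd_inverse[OF hx0[OF s] x0_nz[OF s]]])
       apply (unfold P_def, rule cpow_deriv[OF s])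
      using s x0_nz[OF s] F1[OF s] apply (simp add: field_simps x1)
      using F1[OF s] by algebra
  qed
  define A where "A s = (of_real s :: complex) powr (\<nu>1 / 2)" for s
  have A_nz: "A s \<noteq> 0" if "s > 0" for s using cpow_nz[OF that] by (simp add: A_def)
  have A_d: "(A has_vector_derivative (\<nu>1 / 2 * A s / of_real s)) (at s)" if "s > 0" for s
    unfolding A_def by (rule cpow_deriv[OF that])
  have B_eq: "(of_real s :: complex) powr (- \<nu>1 / 2) = 1 / A s" if "s > 0" for s
  proof -
    have "(of_real s :: complex) powr (- \<nu>1 / 2 + \<nu>1 / 2) = 1" using that by (simp add: powr_def)
    then show ?thesis using cpow_add[OF that, of "- \<nu>1 / 2" "\<nu>1 / 2"] A_nz[OF that]
      by (simp add: A_def field_simps)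
  qed
  have P_eq: "P s = 1 / (A s)^2" if "s > 0" for s
  proof -
    have "(of_real s :: complex) powr (- \<nu>1 + \<nu>1 / 2 + \<nu>1 / 2) = 1" using that by (simp add: powr_def)
    then show ?thesis using cpow_add[OF that, of "- \<nu>1 + \<nu>1 / 2" "\<nu>1 / 2"] 
        cpow_add[OF that, of "- \<nu>1" "\<nu>1 / 2"] A_nz[OF that]
      by (simp add: A_def P_def field_simps power2_eq_square)
  qed
  have F4: "y1 s = (A s)^2 * x0 s" if "s > 0" for s
    using F4a[OF that] P_eq[OF that] x0_nz[OF that] A_nz[OF that] by (simp add: field_simps)
  have F5: "x1 s * (A s)^2 = - y0 s" if "s > 0" for s
  proof -
    have "x0 s * (y0 s + x1 s * (A s)^2) = 0" using F1[OF that] F4[OF that] by (simp add: algebra_simps)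
    then have "y0 s + x1 s * (A s)^2 = 0" using x0_nz[OF that] by simp
    then show ?thesis by (simp add: eq_neg_iff_add_eq_0 add.commute)
  qed
  have ofr: "((\<lambda>s. of_real s :: complex) has_vector_derivative 1) (at s)" for s
    using has_vector_derivative_of_real[OF DERIV_ident] by simp
  have ofr0: "((\<lambda>s. of_real s :: complex) \<longlongrightarrow> 0) (at_right 0)"
    by (rule tendsto_eq_intros) (auto intro: tendsto_ident_at)
  have K1: "of_real s * (x0 s * y1 s) + \<eta>0 s * \<eta>0 s - \<eta>0 s - 2 * \<xi>0 s - \<nu>1 * \<eta>0 s = 0" if "s > 0" for s
  proof (rule const0[OF _ _ that])
    show "((\<lambda>s. of_real s * (x0 s * y1 s) + \<eta>0 s * \<eta>0 s - \<eta>0 s - 2 * \<xi>0 s - \<nu>1 * \<eta>0 s) \<longlongrightarrow> 0) (at_right 0)"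
      apply (rule tendsto_eq_rhs)
       apply (rule b01 b00 b10 b\<eta>0 b\<xi>0 ofr0 tendsto_const tendsto_add tendsto_diff tendsto_mult)+
      using e2 by simp
    fix s :: real assume s: "s > 0"
    have x1: "\<xi>1 s = \<eta>0 s - \<nu>1" using F2[OF s] by (simp add: algebra_simps)
    have x2: "\<eta>1 s = - \<xi>0 s" using F3[OF s] by (simp add: eq_neg_iff_add_eq_0 add.commute)
    show "((\<lambda>s. of_real s * (x0 s * y1 s) + \<eta>0 s * \<eta>0 s - \<eta>0 s - 2 * \<xi>0 s - \<nu>1 * \<eta>0 s) has_vector_derivative 0) (at s)"
      apply (rule hvd_eq)
       apply (rule has_vector_derivative_add has_vector_derivative_diff has_vector_derivative_mult_right has_vector_derivative_mult
          has_vector_derivative_const ofr hx0[OF s] hx1[OF s] hy0[OF s] hy1[OF s]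
          h\<xi>0[OF s] h\<xi>1[OF s] h\<eta>0[OF s] h\<eta>1[OF s])+
      using s apply (simp add: field_simps x1 x2)
      using F1[OF s] by algebra
  qed
  have K2: "x1 s * y0 s - \<nu>1 * (x0 s * y0 s) - of_real s * (x0 s * y1 s) - 2 * \<xi>0 s * (x0 s * y1 s)
     + 2 * \<eta>0 s * (x0 s * y0 s) + \<eta>0 s = 0" if "s > 0" for s
  proof (rule const0[OF _ _ that])
    show "((\<lambda>s. x1 s * y0 s - \<nu>1 * (x0 s * y0 s) - of_real s * (x0 s * y1 s) - 2 * \<xi>0 s * (x0 s * y1 s)
     + 2 * \<eta>0 s * (x0 s * y0 s) + \<eta>0 s) \<longlongrightarrow> 0) (at_right 0)"
      apply (rule tendsto_eq_rhs)
       apply (rule b01 b00 b10 b\<eta>0 b\<xi>0 ofr0 tendsto_const tendsto_add tendsto_diff tendsto_mult)+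
      using e2 by simp
    fix s :: real assume s: "s > 0"
    have x1: "\<xi>1 s = \<eta>0 s - \<nu>1" using F2[OF s] by (simp add: algebra_simps)
    have x2: "\<eta>1 s = - \<xi>0 s" using F3[OF s] by (simp add: eq_neg_iff_add_eq_0 add.commute)
    show "((\<lambda>s. x1 s * y0 s - \<nu>1 * (x0 s * y0 s) - of_real s * (x0 s * y1 s) - 2 * \<xi>0 s * (x0 s * y1 s)
     + 2 * \<eta>0 s * (x0 s * y0 s) + \<eta>0 s) has_vector_derivative 0) (at s)"
      apply (rule hvd_eq)
       apply (rule has_vector_derivative_add has_vector_derivative_diff has_vector_derivative_mult_right has_vector_derivative_mult
          has_vector_derivative_const ofr hx0[OF s] hx1[OF s] hy0[OF s] hy1[OF s]
          h\<xi>0[OF s] h\<xi>1[OF s] h\<eta>0[OF s] h\<eta>1[OF s])+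
      using s by (simp add: field_simps x1 x2)
  qed
  have F5': "x1 s = - y0 s / (A s)^2" if "s > 0" for s
    using F5[OF that] A_nz[OF that] by (simp add: field_simps)
  have x1: "\<xi>1 s = \<eta>0 s - \<nu>1" if "s > 0" for s using F2[OF that] by (simp add: algebra_simps)
  have x2: "\<eta>1 s = - \<xi>0 s" if "s > 0" for s using F3[OF that] by (simp add: eq_neg_iff_add_eq_0 add.commute)
  have ii: "\<i> * \<i> = (-1::complex)" by simp
  have qf: "q \<tau> = - \<i> * A (\<tau>/4) * x0 (\<tau>/4)" if "\<tau> > 0" for \<tau>
    using dq[OF that] B_eq[of "\<tau>/4"] A_nz[of "\<tau>/4"] that by (simp add: field_simps)
  have pf: "p \<tau> = - \<i> * y0 (\<tau>/4) * inverse (A (\<tau>/4)) + \<nu>1 / 2 * (- \<i> * A (\<tau>/4) * x0 (\<tau>/4))" if "\<tau> > 0" for \<tau>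
    using dp[OF that] qf[OF that] A_nz[of "\<tau>/4"] that unfolding A_def[symmetric] apply (simp add: field_simps)
    using ii by algebra
  have uf: "u \<tau> = - 4 * \<eta>0 (\<tau>/4)" if "\<tau> > 0" for \<tau>
    using du[OF that] by simp
  have vf: "v \<tau> = - 4 * \<xi>0 (\<tau>/4) - 2 * \<nu>1 * \<eta>0 (\<tau>/4)" if "\<tau> > 0" for \<tau>
    using dv[OF that] uf[OF that] apply (simp add: field_simps)
    by algebra
  show ?thesis
  proof (intro allI impI)
    fix t :: real assume t: "t > 0"
    define s where "s = t / 4"
    have s: "s > 0" using t by (simp add: s_def)
    have ts: "(of_real t :: complex) = 4 * of_real s" by (simp add: s_def)
    note subst = qf[OF t] pf[OF t] uf[OF t] vf[OF t] s_def[symmetric] F4[OF s] F5'[OF s] x1[OF s] x2[OF s] ts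
    have st: "0 < t/4" using t by simp
    have A0: "A s \<noteq> 0" using A_nz[OF s] .
    have G1: "of_real t * (q t)\<^sup>2 = (1 / 4) * (u t)\<^sup>2 + u t + 2 * v t"
      using A0 s apply (simp add: subst field_simps)
      using K1[OF s] F4[OF s] ii by algebra
    show "of_real t * (q t)\<^sup>2 = (1 / 4) * (u t)\<^sup>2 + u t + 2 * v t
         \<and> u t = 4 * (p t)\<^sup>2 - (\<nu>1\<^sup>2 - of_real t + 2 * v t) * (q t)\<^sup>2 + 2 * q t * p t * u t
         \<and> (u has_vector_derivative (q t)\<^sup>2) (at t)
         \<and> (v has_vector_derivative (q t * p t)) (at t)
         \<and> (q has_vector_derivative ((p t + (1 / 4) * q t * u t) / of_real t)) (at t)
         \<and> (p has_vector_derivative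
              (((1 / 4) * \<nu>1\<^sup>2 - (1 / 4) * of_real t + (1 / 2) * v t) * q t - (1 / 4) * p t * u t) / of_real t) (at t)"
    proof (intro conjI)
      show "of_real t * (q t)\<^sup>2 = (1 / 4) * (u t)\<^sup>2 + u t + 2 * v t" by (rule G1)
      have K2': "- (x0 s * y0 s * \<nu>1) - x0 s * (A s)\<^sup>2 * x0 s * of_real s - 2 * \<xi>0 s * (x0 s * (A s)\<^sup>2 * x0 s) +
          2 * \<eta>0 s * (x0 s * y0 s) + \<eta>0 s = y0 s * y0 s / (A s)\<^sup>2"
        using K2[OF s] F4[OF s] F5'[OF s] by (simp add: algebra_simps)
      show "u t = 4 * (p t)\<^sup>2 - (\<nu>1\<^sup>2 - of_real t + 2 * v t) * (q t)\<^sup>2 + 2 * q t * p t * u t"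
        using A0 s apply (simp add: subst field_simps)
        using K2' A0 apply (simp add: field_simps)
        using ii by algebra
      show "(u has_vector_derivative (q t)\<^sup>2) (at t)"
        apply (rule chain4_open[where f="\<lambda>s. - 4 * \<eta>0 s"])
           apply (rule has_vector_derivative_mult_right h\<eta>0[OF st])+
        using t s apply (simp_all add: uf)
        using A0 apply (simp add: subst field_simps)
        by ((simp add: power2_eq_square; fail) | algebra | (use ii in algebra))
      show "(v has_vector_derivative (q t * p t)) (at t)"
        apply (rule chain4_open[where f="\<lambda>s. - 4 * \<xi>0 s - 2 * \<nu>1 * \<eta>0 s"])
           apply (rule has_vector_derivative_diff has_vector_derivative_mult_right h\<eta>0[OF st] h\<xi>0[OF st])+
        using t s apply (simp_all add: vf)
        using A0 apply (simp add: subst field_simps)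
        by ((simp add: power2_eq_square; fail) | algebra | (use ii in algebra))
      show "(q has_vector_derivative ((p t + (1 / 4) * q t * u t) / of_real t)) (at t)"
        apply (rule chain4_open[where f="\<lambda>s. - \<i> * A s * x0 s"])
           apply (rule has_vector_derivative_mult_right has_vector_derivative_mult A_d[OF st] hx0[OF st])+
        using t s apply (simp_all add: qf)
        using A0 apply (simp add: subst field_simps)
        by ((simp add: power2_eq_square; fail) | algebra | (use ii in algebra))
      show "(p has_vector_derivative
              (((1 / 4) * \<nu>1\<^sup>2 - (1 / 4) * of_real t + (1 / 2) * v t) * q t - (1 / 4) * p t * u t) / of_real t) (at t)"
        apply (rule chain4_open[where f="\<lambda>s. - \<i> * y0 s * inverse (A s) + \<nu>1 / 2 * (- \<i> * A s * x0 s)"])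
           apply (rule has_vector_derivative_add has_vector_derivative_mult_right has_vector_derivative_mult
             hvd_inverse A_d[OF st] hx0[OF st] hy0[OF st] A_nz[OF st])+
        using t s apply (simp_all add: pf)
        using A0 apply (simp add: subst field_simps)
        by ((simp add: power2_eq_square; fail) | algebra | (use ii in algebra))
    qed
  qed
qed

end
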